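(* Consider the mining game with $N\ge 2$ miners, costs-per-hash $0<c_1\le c_2\le\dots\le c_N$, reward $R>0$ and capacity parameter $\gamma\ge 0$. There exists a unique equilibrium hash rate profile $h^*$. Moreover, there is an integer $n$ with $2\le n\le N$ such that $$h_i^*=\begin{cases}\dfrac{H^*(R-c_iH^* )}{R+\gamma (H^* )^2}, & 1\le i\le n,\\[2mm] 0, & n<i\le N,\end{cases}$$ and the equilibrium aggregate hash rate $H^*=\sum_{j=1}^N h_j^*$ is $$H^*=\begin{cases}\dfrac{\sqrt{(c^{(n)})^2+4(n-1)R\gamma}-c^{(n)}}{2\gamma}, & \gamma>0,\\[2mm] \dfrac{(n-1)R}{c^{(n)}}, & \gamma=0,\end{cases}$$ where $c^{(n)}=\sum_{i=1}^n c_i$.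
   Context: Mining game: there are $N\ge2$ miners, indexed so that their costs-per-hash satisfy $0<c_1\le\dots\le c_N$ (in the paper these are the costs $c_i=c_i(\beta_i)$ resulting from an arbitrary fixed hardware-investment profile $\beta\in[0,1]^N$). Each miner $i$ chooses a hash rate $h_i\ge 0$, and $H=\sum_{j=1}^N h_j$. The payoff of miner $i$ is $\pi_i(h_i;h_{-i})=\frac{h_i}{H}R-c_ih_i-\frac{\gamma}{2}h_i^2$ if $H>0$ and $\pi_i=0$ if $H=0$. An equilibrium hash rate profile is a vector $h^*\in[0,\infty)^N$ such that $\pi_i(h_i^*;h_{-i}^* )=\sup_{h_i\ge0}\pi_i(h_i;h_{-i}^* )$ for every $i$. *)

theory Defs
  imports "HOL-Analysis.Analysis"
begin

text \<open>Miners are indexed by 1..N; a hash rate profile is a function nat => real,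
  only its values on 1..N matter.\<close>

definition agg :: "nat \<Rightarrow> (nat \<Rightarrow> real) \<Rightarrow> real" where
  "agg N h = (\<Sum>j=1..N. h j)"

definition payoff :: "nat \<Rightarrow> (nat \<Rightarrow> real) \<Rightarrow> real \<Rightarrow> real \<Rightarrow> nat \<Rightarrow> (nat \<Rightarrow> real) \<Rightarrow> real" where
  "payoff N c R \<gamma> i h =
     (if agg N h > 0 then h i / agg N h * R - c i * h i - \<gamma> / 2 * (h i)^2 else 0)"

definition is_equilibrium :: "nat \<Rightarrow> (nat \<Rightarrow> real) \<Rightarrow> real \<Rightarrow> real \<Rightarrow> (nat \<Rightarrow> real) \<Rightarrow> bool" where
  "is_equilibrium N c R \<gamma> h \<longleftrightarrow>
     (\<forall>i\<in>{1..N}. h i \<ge> 0) \<and>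
     (\<forall>i\<in>{1..N}. payoff N c R \<gamma> i h = (SUP x\<in>{0..}. payoff N c R \<gamma> i (h(i := x))))"

end

theory Submission
  imports Defs
begin

lemma agg_minus:
  assumes "i \<in> {1..N}"
  shows "agg N h - h i = (\<Sum>j\<in>{1..N}-{i}. h j)"
  unfolding agg_def using sum.remove[of "{1..N}" i h] assms by simp

lemma agg_upd:
  assumes "i \<in> {1..N}"
  shows "agg N (h(i:=x)) = (agg N h - h i) + x"
proof -
  have "agg N (h(i:=x)) - (h(i:=x)) i = agg N h - h i"
    unfolding agg_minus[OF assms] by (intro sum.cong) auto
  then show ?thesis by simp
qed

lemma payoff_upd:
  assumes "i \<in> {1..N}"
  shows "payoff N c R \<gamma> i (h(i:=x)) =
    (if (agg N h - h i) + x > 0 then x / ((agg N h - h i) + x) * R - c i * x - \<gamma>/2 * x^2 else 0)"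
  unfolding payoff_def agg_upd[OF assms] by simp

lemma best_resp:
  fixes S y x c R \<gamma> :: real
  assumes S: "S > 0" and y: "y \<ge> 0" and x: "x \<ge> 0" and g: "\<gamma> \<ge> 0" and R: "R > 0"
    and c1: "y > 0 \<Longrightarrow> R * S = (c + \<gamma> * y) * (y + S)^2"
    and c0: "y = 0 \<Longrightarrow> R \<le> c * S"
  shows "x / (S + x) * R - c * x - \<gamma>/2 * x^2 \<le> y / (S + y) * R - c * y - \<gamma>/2 * y^2"
proof -
  define a where "a = y + S"
  define b where "b = x + S"
  have a: "a > 0" and b: "b > 0" using S x y by (auto simp: a_def b_def)
  have conv: "1/b \<ge> 1/a - (b - a)/a^2"
  proof -
    have "a^2 * b * (1/a - (b - a)/a^2) = a*b - (b-a)*b" using a b by (simp add: field_simps power2_eq_square)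
    also have "\<dots> \<le> a^2" using zero_le_power2[of "a - b"] by (simp add: power2_eq_square algebra_simps)
    also have "\<dots> = a^2 * b * (1/b)" using b by simp
    finally have "b * (1/a - (b - a)/a^2) \<le> 1" using a b by (simp add: mult_le_cancel_left_pos)
    then show ?thesis using b by (simp add: pos_le_divide_eq mult.commute)
  qed
  have ex: "x / (S + x) * R = R - R * S * (1/b)" using b by (simp add: b_def field_simps)
  have ey: "y / (S + y) * R = R - R * S * (1/a)" using a by (simp add: a_def field_simps)
  have t1: "R * S * (1/b) \<ge> R * S * (1/a) - R * S / a^2 * (x - y)"
  proof -
    have "R*S*(1/b) \<ge> R*S*(1/a - (b - a)/a^2)" using conv R S by (intro mult_left_mono) auto
    moreover have "b - a = x - y" by (simp add: a_def b_def)
    ultimately show ?thesis by (simp add: algebra_simps)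
  qed
  have t2: "\<gamma>/2 * x^2 \<ge> \<gamma>/2 * y^2 + \<gamma> * y * (x - y)"
  proof -
    have "\<gamma>/2 * x^2 - (\<gamma>/2 * y^2 + \<gamma> * y * (x - y)) = \<gamma>/2 * (x - y)^2" by (simp add: algebra_simps power2_eq_square)
    also have "\<dots> \<ge> 0" using g by simp
    finally show ?thesis by simp
  qed
  have coef: "(R * S / a^2 - c - \<gamma> * y) * (x - y) \<le> 0"
  proof (cases "y > 0")
    case True
    then have "R * S / a^2 = c + \<gamma> * y" using c1 a by (simp add: a_def field_simps)
    then show ?thesis by simp
  next
    case False
    then have "y = 0" using y by simp
    then have "R * S / a^2 - c - \<gamma> * y = R / S - c" using S by (simp add: a_def power2_eq_square)
    moreover have "R / S - c \<le> 0" using c0 \<open>y = 0\<close> S by (simp add: field_simps)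
    ultimately show ?thesis using x \<open>y = 0\<close> by (simp add: mult_nonpos_nonneg)
  qed
  have "x / (S + x) * R - c * x - \<gamma>/2 * x^2 \<le> (y / (S + y) * R - c * y - \<gamma>/2 * y^2) + (R * S / a^2 - c - \<gamma> * y) * (x - y)"
    unfolding ex ey using t1 t2 by (simp add: algebra_simps)
  with coef show ?thesis by linarith
qed

lemma S_pos:
  fixes S y c R \<gamma> :: real
  assumes S: "S \<ge> 0" and y: "y \<ge> 0" and c: "c > 0" and R: "R > 0" and g: "\<gamma> \<ge> 0"
    and opt: "\<And>x. x \<ge> 0 \<Longrightarrow> (if S + x > 0 then x/(S+x)*R - c*x - \<gamma>/2*x^2 else 0)
                 \<le> (if S + y > 0 then y/(S+y)*R - c*y - \<gamma>/2*y^2 else 0)"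
  shows "S > 0"
proof (rule ccontr)
  assume "\<not> S > 0"
  then have S0: "S = 0" using S by simp
  show False
  proof (cases "y > 0")
    case True
    have "(if S + y/2 > 0 then (y/2)/(S+y/2)*R - c*(y/2) - \<gamma>/2*(y/2)^2 else 0)
          \<le> (if S + y > 0 then y/(S+y)*R - c*y - \<gamma>/2*y^2 else 0)" using opt[of "y/2"] True by simp
    then have "R - c*(y/2) - \<gamma>/2*(y/2)^2 \<le> R - c*y - \<gamma>/2*y^2" using True S0 by simp
    moreover have "\<gamma>/2*(y/2)^2 \<le> \<gamma>/2*y^2" using g True by (intro mult_left_mono power_mono) auto
    ultimately show False using mult_pos_pos[OF c True] by linarith
  next
    case False
    then have y0: "y = 0" using y by simp
    define x where "x = min 1 (R / (2*(c+\<gamma>)))"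
    have cg: "c + \<gamma> > 0" using c g by simp
    have x0: "x > 0" using R cg by (simp add: x_def)
    have x1: "x \<le> 1" by (simp add: x_def)
    have x2: "x * (c+\<gamma>) \<le> R/2"
    proof -
      have "x \<le> R / (2*(c+\<gamma>))" by (simp add: x_def)
      then have "x * (c+\<gamma>) \<le> R / (2*(c+\<gamma>)) * (c+\<gamma>)" using cg by (intro mult_right_mono) auto
      also have "\<dots> = R/2" using cg by (simp add: field_simps)
      finally show ?thesis .
    qed
    have "x^2 \<le> x" using x0 x1 by (simp add: power2_eq_square mult_le_cancel_left1)
    then have "\<gamma>/2*x^2 \<le> \<gamma>/2*x" using g by (intro mult_left_mono) auto
    then have "\<gamma>/2*x^2 \<le> \<gamma>*x" using g x0 using mult_nonneg_nonneg[of \<gamma> x] by linarith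
    then have "c*x + \<gamma>/2*x^2 < R" using x2 R by (simp add: algebra_simps)
    moreover have "(if S + x > 0 then x/(S+x)*R - c*x - \<gamma>/2*x^2 else 0) \<le> 0"
      using opt[of x] x0 y0 S0 by simp
    ultimately show False using x0 S0 by simp
  qed
qed

lemma foc:
  fixes S y c R \<gamma> :: real
  assumes S: "S > 0" and y: "y \<ge> 0" and R: "R > 0" and g: "\<gamma> \<ge> 0"
    and opt: "\<And>x. x \<ge> 0 \<Longrightarrow> x/(S+x)*R - c*x - \<gamma>/2*x^2 \<le> y/(S+y)*R - c*y - \<gamma>/2*y^2"
  shows "y = (S + y) * max 0 (R - c*(S+y)) / (R + \<gamma>*(S+y)^2)"
proof -
  define f where "f x = x/(S+x)*R - c*x - \<gamma>/2*x^2" for x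
  have der: "(f has_real_derivative (R*S/(S+x)^2 - c - \<gamma>*x)) (at x)" if "S + x \<noteq> 0" for x
  proof -
    have "(f has_real_derivative ((1*(S+x) - x*(0+1))/((S+x)*(S+x))*R - c*1 - \<gamma>/2*(2*x^1*1))) (at x)"
      unfolding f_def using that
      by (intro derivative_eq_intros) auto
    moreover have "(1*(S+x) - x*(0+1))/((S+x)*(S+x))*R - c*1 - \<gamma>/2*(2*x^1*1) = R*S/(S+x)^2 - c - \<gamma>*x"
      by (simp add: power2_eq_square)
    ultimately show ?thesis by simp
  qed
  have D: "R + \<gamma>*(S+y)^2 > 0" using R g by (simp add: add_pos_nonneg)
  show ?thesis
  proof (cases "y > 0")
    case True
    have "R*S/(S+y)^2 - c - \<gamma>*y = 0"
    proof (rule DERIV_local_max[OF _ True])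
      show "(f has_real_derivative (R*S/(S+y)^2 - c - \<gamma>*y)) (at y)" using der S y by simp
      show "\<forall>z. \<bar>y - z\<bar> < y \<longrightarrow> f z \<le> f y"
      proof (intro allI impI)
        fix z assume "\<bar>y - z\<bar> < y"
        then have "z \<ge> 0" by linarith
        then show "f z \<le> f y" using opt[of z] unfolding f_def by blast
      qed
    qed
    then have "R*S = (c + \<gamma>*y) * (S+y)^2" using S y by (simp add: field_simps)
    then have e: "y * (R + \<gamma>*(S+y)^2) = (S+y) * (R - c*(S+y))" by (simp add: algebra_simps power2_eq_square)
    then have "(S+y) * (R - c*(S+y)) > 0" using True D by (metis mult_pos_pos)
    then have "R - c*(S+y) > 0" using S y by (simp add: zero_less_mult_iff)
    then have "max 0 (R - c*(S+y)) = R - c*(S+y)" by simp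
    then show ?thesis using e D by (simp add: field_simps)
  next
    case False
    then have y0: "y = 0" using y by simp
    have "R - c*S \<le> 0"
    proof (rule ccontr)
      assume "\<not> R - c*S \<le> 0"
      then have "R*S/(S+0)^2 - c - \<gamma>*0 > 0" using S by (simp add: power2_eq_square field_simps)
      from DERIV_pos_inc_right[OF der[of 0] this] S obtain d where d: "d > 0" "\<forall>h>0. h < d \<longrightarrow> f 0 < f (0 + h)"
        by auto
      then have "f 0 < f (d/2)" by simp
      moreover have "f (d/2) \<le> f 0" using opt[of "d/2"] d y0 unfolding f_def by simp
      ultimately show False by simp
    qed
    then show ?thesis using y0 by simp
  qed
qed

lemma root_lt:
  fixes c :: "nat \<Rightarrow> real"
  assumes cpos: "\<And>i. i \<in> {1..N} \<Longrightarrow> c i > 0" and R: "R > 0" and g: "\<gamma> \<ge> 0"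
    and H1: "H1 \<ge> 0" and lt: "H1 < H2"
    and k1: "(\<Sum>i=1..N. max 0 (R - c i * H1)) = R + \<gamma> * H1^2"
    and k2: "(\<Sum>i=1..N. max 0 (R - c i * H2)) = R + \<gamma> * H2^2"
  shows False
proof -
  have ex: "\<exists>k\<in>{1..N}. max 0 (R - c k * H2) < max 0 (R - c k * H1)"
  proof (rule ccontr)
    assume "\<not> ?thesis"
    then have "\<forall>k\<in>{1..N}. max 0 (R - c k * H2) = 0"
    proof (intro ballI)
      fix k assume k: "k \<in> {1..N}" and ne: "\<not> (\<exists>k\<in>{1..N}. max 0 (R - c k * H2) < max 0 (R - c k * H1))"
      have "c k * H1 < c k * H2" using cpos[OF k] lt by simp
      then show "max 0 (R - c k * H2) = 0" using ne k by (auto simp: max_def split: if_splits)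
    qed
    then have "(\<Sum>i=1..N. max 0 (R - c i * H2)) = 0" by simp
    then show False using k2 R g by (smt (verit) zero_le_power2 mult_nonneg_nonneg)
  qed
  have le: "\<forall>k\<in>{1..N}. max 0 (R - c k * H2) \<le> max 0 (R - c k * H1)"
  proof
    fix k assume k: "k \<in> {1..N}"
    have "c k * H1 \<le> c k * H2" using cpos[OF k] lt by simp
    then show "max 0 (R - c k * H2) \<le> max 0 (R - c k * H1)" by simp
  qed
  have "(\<Sum>i=1..N. max 0 (R - c i * H2)) < (\<Sum>i=1..N. max 0 (R - c i * H1))"
    by (rule sum_strict_mono_ex1[OF _ le ex]) simp
  moreover have "H1^2 \<le> H2^2" using H1 lt by (intro power_mono) auto
  ultimately show False using k1 k2 g by (smt (verit) mult_left_mono)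
qed

theorem proposition4p1:
  fixes N :: nat and c :: "nat \<Rightarrow> real" and R \<gamma> :: real
  assumes "N \<ge> 2"
    and "c 1 > 0"
    and "\<And>i j. 1 \<le> i \<Longrightarrow> i \<le> j \<Longrightarrow> j \<le> N \<Longrightarrow> c i \<le> c j"
    and "R > 0" and "\<gamma> \<ge> 0"
  shows "\<exists>h. is_equilibrium N c R \<gamma> h
           \<and> (\<forall>h'. is_equilibrium N c R \<gamma> h' \<longrightarrow> (\<forall>i\<in>{1..N}. h' i = h i))
           \<and> (\<exists>n::nat. 2 \<le> n \<and> n \<le> N
                \<and> (let H = agg N h; cn = (\<Sum>i=1..n. c i) in
                     (\<forall>i\<in>{1..n}. h i = H * (R - c i * H) / (R + \<gamma> * H^2))
                   \<and> (\<forall>i\<in>{n<..N}. h i = 0)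
                   \<and> H = (if \<gamma> > 0 then (sqrt (cn^2 + 4 * (real n - 1) * R * \<gamma>) - cn) / (2 * \<gamma>)
                          else (real n - 1) * R / cn)))"
proof -
  note N = assms(1) and c1 = assms(2) and mono = assms(3) and R = assms(4) and g = assms(5)
  have cpos: "c i > 0" if "i \<in> {1..N}" for i using mono[of 1 i] c1 that by auto
  define phi where "phi = (\<lambda>H. (\<Sum>i=1..N. max 0 (R - c i * H)) - R - \<gamma> * H^2)"
  have phi0: "phi 0 > 0"
  proof -
    have "phi 0 = real N * R - R" unfolding phi_def using R by simp
    moreover have "real N * R \<ge> 2 * R" using N R by (intro mult_right_mono) auto
    ultimately show ?thesis using R by simp
  qed
  have phib: "phi (R / c 1) \<le> 0"
  proof -
    have "max 0 (R - c i * (R / c 1)) = 0" if "i \<in> {1..N}" for i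
    proof -
      have "c 1 \<le> c i" using mono[of 1 i] that by auto
      then have "R * c 1 \<le> R * c i" using R by simp
      then have "R \<le> c i * (R / c 1)" using c1 by (simp add: field_simps)
      then show ?thesis by simp
    qed
    then have "(\<Sum>i=1..N. max 0 (R - c i * (R / c 1))) = 0" by simp
    moreover have "\<gamma> * (R / c 1)^2 \<ge> 0" using g by simp
    ultimately show ?thesis unfolding phi_def using R by simp
  qed
  have cont: "\<forall>x. 0 \<le> x \<and> x \<le> R / c 1 \<longrightarrow> isCont phi x"
    unfolding phi_def by (intro allI impI continuous_intros)
  obtain H where H0: "0 \<le> H" and "H \<le> R / c 1" and pH: "phi H = 0"
    using IVT2[of phi "R / c 1" 0 0, OF phib less_imp_le[OF phi0] _ cont] R c1 by auto
  have Hpos: "H > 0" using H0 pH phi0 by (cases "H = 0") auto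
  have key: "(\<Sum>i=1..N. max 0 (R - c i * H)) = R + \<gamma> * H^2" using pH unfolding phi_def by simp
  define D where "D = R + \<gamma> * H^2"
  have gH2: "\<gamma> * H^2 \<ge> 0" using g by simp
  have Dpos: "D > 0" unfolding D_def using R g by (simp add: add_pos_nonneg)
  define h where "h = (\<lambda>i. H * max 0 (R - c i * H) / D)"
  have aggH: "agg N h = H"
  proof -
    have "agg N h = H * (\<Sum>i=1..N. max 0 (R - c i * H)) / D"
      unfolding agg_def h_def by (simp add: sum_distrib_left sum_divide_distrib)
    then show ?thesis using key Dpos unfolding D_def by simp
  qed
  have hnn: "h i \<ge> 0" for i unfolding h_def using Hpos Dpos by simp
  have hlt: "h i < H" if i: "i \<in> {1..N}" for i
  proof -
    have "c i * H > 0" using cpos[OF i] Hpos by simp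
    then have "max 0 (R - c i * H) < D" using R gH2 Dpos unfolding D_def by simp
    then have "max 0 (R - c i * H) / D < 1" using Dpos by simp
    then have "H * (max 0 (R - c i * H) / D) < H * 1" using Hpos by (intro mult_strict_left_mono)
    then show ?thesis unfolding h_def by simp
  qed
  have hpos_max: "max 0 (R - c i * H) = R - c i * H" if "h i > 0" for i
  proof (rule ccontr)
    assume "max 0 (R - c i * H) \<noteq> R - c i * H"
    then have "max 0 (R - c i * H) = 0" by (simp add: max_def split: if_splits)
    then show False using that unfolding h_def by simp
  qed
  have hzero_max: "R \<le> c i * H" if "h i = 0" for i
  proof -
    have "max 0 (R - c i * H) = 0" using that Hpos Dpos unfolding h_def by simp
    then show ?thesis by simp
  qed
  have hD: "h i * D = H * max 0 (R - c i * H)" for i unfolding h_def using Dpos by simp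
  have equil: "is_equilibrium N c R \<gamma> h"
    unfolding is_equilibrium_def
  proof (intro conjI ballI)
    fix i assume "i \<in> {1..N}" then show "h i \<ge> 0" using hnn by simp
  next
    fix i assume i: "i \<in> {1..N}"
    define S where "S = agg N h - h i"
    have S: "S > 0" unfolding S_def aggH using hlt[OF i] by simp
    have SH: "S + h i = H" unfolding S_def aggH by simp
    have pu: "payoff N c R \<gamma> i (h(i:=x)) = x / (S + x) * R - c i * x - \<gamma>/2 * x^2" if "x \<ge> 0" for x
      unfolding payoff_upd[OF i] S_def[symmetric] using S that by simp
    have ph: "payoff N c R \<gamma> i h = h i / (S + h i) * R - c i * h i - \<gamma>/2 * (h i)^2"
      using pu[OF hnn[of i]] by simp
    have le: "payoff N c R \<gamma> i (h(i:=x)) \<le> payoff N c R \<gamma> i h" if x: "x \<ge> 0" for x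
      unfolding pu[OF x] ph
    proof (rule best_resp[OF S hnn x g R])
      assume hp: "h i > 0"
      have "h i * (R + \<gamma> * H^2) = H * (R - c i * H)" using hD[of i] hpos_max[OF hp] unfolding D_def by simp
      then show "R * S = (c i + \<gamma> * h i) * (h i + S)^2"
        using SH by (simp add: algebra_simps power2_eq_square S_def aggH)
    next
      assume "h i = 0"
      then show "R \<le> c i * S" using hzero_max[of i] SH by simp
    qed
    show "payoff N c R \<gamma> i h = (SUP x\<in>{0..}. payoff N c R \<gamma> i (h(i := x)))"
    proof (rule sym, rule cSup_eq_maximum)
      show "payoff N c R \<gamma> i h \<in> (\<lambda>x. payoff N c R \<gamma> i (h(i := x))) ` {0..}"
        using hnn[of i] by (intro image_eqI[of _ _ "h i"]) auto
      show "\<And>y. y \<in> (\<lambda>x. payoff N c R \<gamma> i (h(i := x))) ` {0..} \<Longrightarrow> y \<le> payoff N c R \<gamma> i h"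
        using le by auto
    qed
  qed
  have uniq: "\<forall>i\<in>{1..N}. h' i = h i" if eq: "is_equilibrium N c R \<gamma> h'" for h'
  proof -
    have nn: "h' i \<ge> 0" if "i \<in> {1..N}" for i using eq that unfolding is_equilibrium_def by auto
    define H' where "H' = agg N h'"
    have Snn: "H' - h' i \<ge> 0" if i: "i \<in> {1..N}" for i
      unfolding H'_def agg_minus[OF i] using nn by (intro sum_nonneg) auto
    have pu: "payoff N c R \<gamma> i (h'(i:=x)) =
      (if (H' - h' i) + x > 0 then x / ((H' - h' i) + x) * R - c i * x - \<gamma>/2 * x^2 else 0)"
      if i: "i \<in> {1..N}" for i x
      unfolding payoff_upd[OF i] H'_def by simp
    have opt: "payoff N c R \<gamma> i (h'(i:=x)) \<le> payoff N c R \<gamma> i h'" if i: "i \<in> {1..N}" and x: "x \<ge> 0" for i x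
    proof -
      have bd: "payoff N c R \<gamma> i (h'(i:=z)) \<le> R" if z: "z \<in> {0..}" for z
      proof (cases "(H' - h' i) + z > 0")
        case True
        have "z / ((H' - h' i) + z) \<le> 1" using True Snn[OF i] by simp
        then have "z / ((H' - h' i) + z) * R \<le> 1 * R" using R by (intro mult_right_mono) auto
        moreover have "c i * z \<ge> 0" using cpos[OF i] z by simp
        moreover have "\<gamma>/2 * z^2 \<ge> 0" using g by simp
        ultimately show ?thesis unfolding pu[OF i] using True by simp
      next
        case False
        then show ?thesis unfolding pu[OF i] using R by simp
      qed
      have "payoff N c R \<gamma> i (h'(i:=x)) \<le> (SUP z\<in>{0..}. payoff N c R \<gamma> i (h'(i := z)))"
        using x by (intro cSUP_upper bdd_aboveI2[OF bd]) auto
      also have "\<dots> = payoff N c R \<gamma> i h'" using eq i unfolding is_equilibrium_def by auto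
      finally show ?thesis .
    qed
    have Spos: "H' - h' i > 0" if i: "i \<in> {1..N}" for i
    proof (rule S_pos[OF Snn[OF i] nn[OF i] cpos[OF i] R g])
      fix x :: real assume x: "x \<ge> 0"
      have "payoff N c R \<gamma> i (h'(i:=x)) \<le> payoff N c R \<gamma> i (h'(i:=h' i))" using opt[OF i x] by simp
      then show "(if H' - h' i + x > 0 then x / (H' - h' i + x) * R - c i * x - \<gamma> / 2 * x^2 else 0)
          \<le> (if H' - h' i + h' i > 0 then h' i / (H' - h' i + h' i) * R - c i * h' i - \<gamma> / 2 * (h' i)^2 else 0)"
        unfolding pu[OF i] .
    qed
    have form: "h' i = H' * max 0 (R - c i * H') / (R + \<gamma> * H'^2)" if i: "i \<in> {1..N}" for i
    proof -
      have "h' i = (H' - h' i + h' i) * max 0 (R - c i * (H' - h' i + h' i)) / (R + \<gamma> * (H' - h' i + h' i)^2)"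
      proof (rule foc[OF Spos[OF i] nn[OF i] R g])
        fix x :: real assume x: "x \<ge> 0"
        have "payoff N c R \<gamma> i (h'(i:=x)) \<le> payoff N c R \<gamma> i (h'(i:=h' i))" using opt[OF i x] by simp
        then show "x / (H' - h' i + x) * R - c i * x - \<gamma> / 2 * x^2
            \<le> h' i / (H' - h' i + h' i) * R - c i * h' i - \<gamma> / 2 * (h' i)^2"
          unfolding pu[OF i] using Spos[OF i] x nn[OF i] by simp
      qed
      then show ?thesis by simp
    qed
    have one: "1 \<in> {1..N}" using N by simp
    have H'pos: "H' > 0" using Spos[OF one] nn[OF one] by simp
    define D' where "D' = R + \<gamma> * H'^2"
    have D'pos: "D' > 0" unfolding D'_def using R g by (simp add: add_pos_nonneg)
    have "H' = (\<Sum>i=1..N. h' i)" unfolding H'_def agg_def ..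
    also have "\<dots> = (\<Sum>i=1..N. H' * max 0 (R - c i * H') / D')"
      unfolding D'_def by (rule sum.cong[OF refl form])
    also have "\<dots> = H' * (\<Sum>i=1..N. max 0 (R - c i * H')) / D'"
      by (simp add: sum_distrib_left sum_divide_distrib)
    finally have "H' * D' = H' * (\<Sum>i=1..N. max 0 (R - c i * H'))" using D'pos by (simp add: field_simps)
    then have key': "(\<Sum>i=1..N. max 0 (R - c i * H')) = R + \<gamma> * H'^2"
      using H'pos unfolding D'_def by simp
    have "H' = H"
    proof (rule ccontr)
      assume "H' \<noteq> H"
      then consider "H' < H" | "H < H'" by linarith
      then show False
      proof cases
        case 1 show False by (rule root_lt[OF cpos R g _ 1 key' key]) (use H'pos in auto)
      next
        case 2 show False by (rule root_lt[OF cpos R g _ 2 key key']) (use Hpos in auto)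
      qed
    qed
    then show ?thesis using form unfolding h_def D_def by simp
  qed
  define n where "n = Max {k. k \<le> N \<and> (\<forall>i\<in>{1..k}. c i * H < R)}"
  have fin: "finite {k. k \<le> N \<and> (\<forall>i\<in>{1..k}. c i * H < R)}" by simp
  have "n \<in> {k. k \<le> N \<and> (\<forall>i\<in>{1..k}. c i * H < R)}"
    unfolding n_def by (rule Max_in[OF fin]) auto
  then have nN: "n \<le> N" and act: "\<And>i. i \<in> {1..n} \<Longrightarrow> c i * H < R" by auto
  have inact: "\<not> c i * H < R" if i: "i \<in> {n<..N}" for i
  proof
    assume lt: "c i * H < R"
    have "\<forall>j\<in>{1..i}. c j * H < R"
    proof
      fix j assume j: "j \<in> {1..i}"
      have "c j \<le> c i" using mono[of j i] j i by auto
      then have "c j * H \<le> c i * H" using Hpos by (simp add: mult_right_mono)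
      then show "c j * H < R" using lt by simp
    qed
    then have "i \<le> n" unfolding n_def using i by (intro Max_ge[OF fin]) auto
    then show False using i by simp
  qed
  define cn where "cn = (\<Sum>i=1..n. c i)"
  have split: "{1..N} = {1..n} \<union> {n<..N}" using nN by auto
  have "(\<Sum>i=1..N. max 0 (R - c i * H)) = (\<Sum>i=1..n. max 0 (R - c i * H)) + (\<Sum>i\<in>{n<..N}. max 0 (R - c i * H))"
    unfolding split by (rule sum.union_disjoint) auto
  also have "(\<Sum>i\<in>{n<..N}. max 0 (R - c i * H)) = 0"
  proof (intro sum.neutral ballI)
    fix i assume "i \<in> {n<..N}"
    then have "\<not> c i * H < R" by (rule inact)
    then show "max 0 (R - c i * H) = 0" by simp
  qed
  also have "(\<Sum>i=1..n. max 0 (R - c i * H)) = (\<Sum>i=1..n. R - c i * H)" using act by (intro sum.cong) auto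
  also have "\<dots> = real n * R - cn * H" unfolding cn_def by (simp add: sum_subtractf sum_distrib_right)
  finally have eqn: "real n * R - cn * H = R + \<gamma> * H^2" using key by simp
  have n2: "2 \<le> n"
  proof (rule ccontr)
    assume "\<not> 2 \<le> n"
    then consider "n = 0" | "n = 1" by linarith
    then show False
    proof cases
      case 1 then show False using eqn R gH2 unfolding cn_def by simp
    next
      case 2
      then have "cn = c 1" unfolding cn_def by simp
      then have "real n * R - cn*H = R - c 1 * H" using 2 by simp
      then show False using eqn gH2 mult_pos_pos[OF c1 Hpos] by linarith
    qed
  qed
  have cnpos: "cn > 0" unfolding cn_def using n2 nN cpos by (intro sum_pos) auto
  have Hform: "H = (if \<gamma> > 0 then (sqrt (cn^2 + 4 * (real n - 1) * R * \<gamma>) - cn) / (2 * \<gamma>)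
                          else (real n - 1) * R / cn)"
  proof (cases "\<gamma> > 0")
    case True
    have e2: "(real n - 1) * R = \<gamma> * H^2 + cn * H" using eqn by (simp add: algebra_simps)
    have "sqrt (cn^2 + 4 * (real n - 1) * R * \<gamma>) = 2 * \<gamma> * H + cn"
    proof (rule real_sqrt_unique)
      show "(2 * \<gamma> * H + cn)^2 = cn^2 + 4 * (real n - 1) * R * \<gamma>"
      proof -
        have "(2 * \<gamma> * H + cn)^2 = cn^2 + 4 * (\<gamma> * H^2 + cn * H) * \<gamma>"
          by (simp add: algebra_simps power2_eq_square)
        then show ?thesis unfolding e2[symmetric] by (simp add: mult.assoc)
      qed
      show "0 \<le> 2 * \<gamma> * H + cn" using True Hpos cnpos by simp
    qed
    then show ?thesis using True by simp
  next
    case False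
    then have "\<gamma> = 0" using g by simp
    then have "(real n - 1) * R = cn * H" using eqn by (simp add: algebra_simps)
    then show ?thesis using False cnpos by (simp add: field_simps)
  qed
  show ?thesis
  proof (intro exI[of _ h] conjI allI impI)
    show "is_equilibrium N c R \<gamma> h" by (rule equil)
  next
    fix h' assume "is_equilibrium N c R \<gamma> h'" then show "\<forall>i\<in>{1..N}. h' i = h i" by (rule uniq)
  next
    show "\<exists>n::nat. 2 \<le> n \<and> n \<le> N
                \<and> (let H = agg N h; cn = (\<Sum>i=1..n. c i) in
                     (\<forall>i\<in>{1..n}. h i = H * (R - c i * H) / (R + \<gamma> * H^2))
                   \<and> (\<forall>i\<in>{n<..N}. h i = 0)
                   \<and> H = (if \<gamma> > 0 then (sqrt (cn^2 + 4 * (real n - 1) * R * \<gamma>) - cn) / (2 * \<gamma>)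
                          else (real n - 1) * R / cn))"
    proof (intro exI[of _ n] conjI)
      show "2 \<le> n" by (rule n2)
      show "n \<le> N" by (rule nN)
      have a: "\<forall>i\<in>{1..n}. h i = H * (R - c i * H) / (R + \<gamma> * H^2)"
      proof
        fix i assume "i \<in> {1..n}"
        then have "max 0 (R - c i * H) = R - c i * H" using act by fastforce
        then show "h i = H * (R - c i * H) / (R + \<gamma> * H^2)" unfolding h_def D_def by simp
      qed
      have b: "\<forall>i\<in>{n<..N}. h i = 0"
      proof
        fix i assume "i \<in> {n<..N}"
        then have "max 0 (R - c i * H) = 0" using inact by fastforce
        then show "h i = 0" unfolding h_def by simp
      qed
      show "let H = agg N h; cn = (\<Sum>i=1..n. c i) in
                     (\<forall>i\<in>{1..n}. h i = H * (R - c i * H) / (R + \<gamma> * H^2))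
                   \<and> (\<forall>i\<in>{n<..N}. h i = 0)
                   \<and> H = (if \<gamma> > 0 then (sqrt (cn^2 + 4 * (real n - 1) * R * \<gamma>) - cn) / (2 * \<gamma>)
                          else (real n - 1) * R / cn)"
        unfolding Let_def aggH cn_def[symmetric] using a b Hform by blast
    qed
  qed
qed

end
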